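(* Let $n\ge2$, $F(a)=\prod_{i=1}^n(a-a_i)$ with distinct real $a_i$, and consider, for $0<a<a_1$, the superintegrable systems (integrals of degree $2n+1$) of the construction below with $\nu_n=1$: $\mathcal{I}_{-+}$: $x(a)=\frac a2-\frac1{\sqrt{a_1-a}}-\sum_{i=2}^n\frac{\xi_i}{\sqrt{a_i-a}}$, so that with $u=\sqrt a\in(0,\sqrt{a_1})$, $g=(\mu^2du^2+dy^2)/u^2$, $\mu=1-\frac1{(a_1-u^2)^{3/2}}-\sum_{i=2}^n\frac{\xi_i}{(a_i-u^2)^{3/2}}$; $\mathcal{I}_{--}$: $x(a)=\frac a2+\frac1{\sqrt{a_1-a}}+\sum_{i=2}^n\frac{\xi_i}{\sqrt{a_i-a}}$, so that $\mu=1+\frac1{(a_1-u^2)^{3/2}}+\sum_{i=2}^n\frac{\xi_i}{(a_i-u^2)^{3/2}}$. These systems (generalizing the cubic cases $\mathcal{I}_{-\pm}$ with $F=a-a_1$) are globally defined on $M\cong\mathbb{H}^2$ under the restrictions $\mathcal{I}_{-+}$: $0<a_1<1$, $a_i>1$ ($i\ge2$), $\xi_i>0$, and $\frac1{|a_1|^{3/2}}+\sum_{i=2}^n\frac{\xi_i}{|a_i|^{3/2}}>1$; $\mathcal{I}_{--}$: $0<a_1<1$, $a_i>1$ ($i\ge2$), $\xi_i>0$.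
   Context: Construction (odd degree $2n+1$): $F=\sum_kA_ka^k=\prod_i(a-a_i)$, signs $\epsilon_i$ (here all $\epsilon_i=-1$), $\Delta_i=\epsilon_i(a-a_i)$, $x=\frac{\nu_n}2a+\sum_i\xi'_i\Delta_i^{-1/2}$ (coefficients $\xi'_i$ read off from the displayed $x$); $H=\Pi^2+aP_y^2$, $\Pi=\frac a{\dot x}P_a$ (geodesic Hamiltonian of $g=\dot x^2a^{-2}da^2+a^{-1}dy^2$, $y\in\mathbb{R}$); $G=\sum_{k=0}^nA_{n-k}H^{n-k}P_y^{2k+1}$, $Q_1=\sum_{k=0}^n\tilde b_kH^{n-k}\Pi P_y^{2k}$, $Q_2=\sum_{k=0}^n\tilde c_kH^{n-k}P_y^{2k+1}$, $S_1=Q_1+yG$, $S_2=Q_2+yQ_1+\frac{y^2}2G$, with $\tilde b_k=(-1)^k(\nu_n\sigma_k+\sum_i\frac{\xi'_i}{\sqrt{\Delta_i}}\sigma^i_{k-1})$, $\tilde c_k=\frac{(-1)^{k+1}}2\{\nu_n^2a\sigma_k+2\nu_n\sum_i\frac{\xi'_i}{\sqrt{\Delta_i}}(\sigma^i_k+a\sigma^i_{k-1})+\sum_i\frac{\xi_i'^2}{\Delta_i}\sigma^i_{k-1}+\sum_{i\neq j}\frac{\xi'_i\xi'_j}{\sqrt{\Delta_i\Delta_j}}(\sigma^{ij}_{k-1}+a\sigma^{ij}_{k-2})\}$; $\sigma_k$ by $\prod_i(a-a_i)=\sum_k(-1)^k\sigma_ka^{n-k}$, $\sigma^i_m$ by $\prod_{l\ne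 i}(a-a_l)=\sum_{m=0}^{n-1}(-1)^m\sigma^i_ma^{n-1-m}$, $\sigma^i_{-1}=\sigma^i_n=0$, $\sigma^{ij}_m$ by $\prod_{l\ne i,j}(a-a_l)=\sum_{m=0}^{n-2}(-1)^m\sigma^{ij}_ma^{n-2-m}$, $\sigma^{ij}_{-2}=\sigma^{ij}_{-1}=\sigma^{ij}_{n-1}=\sigma^{ij}_n=0$. "Globally defined on $M\cong\mathbb{H}^2$": $g$ is a smooth Riemannian metric on the whole domain $M=(0,\sqrt{a_1})_u\times\mathbb{R}_y$, there is a smooth diffeomorphism $t=t(u)$ of $(0,\sqrt{a_1})$ onto $(0,\infty)$ or $(-\infty,0)$ with $g=\Phi(dt^2+dy^2)/t^2$, $\Phi$ smooth positive, and $S_1,S_2$ are smooth on $T^*M$. *)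

theory Defs
  imports "HOL-Analysis.Analysis" "HOL-Computational_Algebra.Polynomial"
begin

text \<open>C^k via iterated partial derivatives along the standard basis, each continuous.
  On open sets this is the usual C^k; smooth means C^k for all k.\<close>

fun Ck_on :: "nat \<Rightarrow> 'a::euclidean_space set \<Rightarrow> ('a \<Rightarrow> real) \<Rightarrow> bool" where
  "Ck_on 0 S f = continuous_on S f"
| "Ck_on (Suc k) S f =
     (continuous_on S f \<and>
      (\<forall>b\<in>Basis. \<exists>g. (\<forall>x\<in>S. ((\<lambda>t. f (x + t *\<^sub>R b)) has_real_derivative g x) (at 0))
                    \<and> Ck_on k S g))"

definition smooth_on :: "'a::euclidean_space set \<Rightarrow> ('a \<Rightarrow> real) \<Rightarrow> bool" where
  "smooth_on S f \<longleftrightarrow> (\<forall>k. Ck_on k S f)"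

text \<open>Roots a_1..a_n are given by Aa :: nat => real on indices {1..n}.
  Coefficients xi'_i by xi' on {1..n}. All signs epsilon_i = -1, so Delta_i = a_i - a.\<close>

definition Fpoly :: "nat \<Rightarrow> (nat \<Rightarrow> real) \<Rightarrow> real poly" where
  "Fpoly n Aa = (\<Prod>i\<in>{1..n}. [:- Aa i, 1:])"

definition Acoef :: "nat \<Rightarrow> (nat \<Rightarrow> real) \<Rightarrow> nat \<Rightarrow> real" where
  "Acoef n Aa k = coeff (Fpoly n Aa) k"

definition sig :: "(nat \<Rightarrow> real) \<Rightarrow> nat set \<Rightarrow> int \<Rightarrow> real" where
  "sig Aa I m = (if 0 \<le> m \<and> m \<le> int (card I)
                 then (-1) ^ nat m * coeff (\<Prod>l\<in>I. [:- Aa l, 1:]) (card I - nat m)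
                 else 0)"

definition Delta :: "(nat \<Rightarrow> real) \<Rightarrow> nat \<Rightarrow> real \<Rightarrow> real" where
  "Delta Aa i a = - (a - Aa i)"

definition xfun :: "nat \<Rightarrow> (nat \<Rightarrow> real) \<Rightarrow> real \<Rightarrow> (nat \<Rightarrow> real) \<Rightarrow> real \<Rightarrow> real" where
  "xfun n Aa nu xi' a = nu / 2 * a + (\<Sum>i\<in>{1..n}. xi' i / sqrt (Delta Aa i a))"

definition xdot :: "nat \<Rightarrow> (nat \<Rightarrow> real) \<Rightarrow> real \<Rightarrow> (nat \<Rightarrow> real) \<Rightarrow> real \<Rightarrow> real" where
  "xdot n Aa nu xi' a = deriv (xfun n Aa nu xi') a"

definition btil :: "nat \<Rightarrow> (nat \<Rightarrow> real) \<Rightarrow> real \<Rightarrow> (nat \<Rightarrow> real) \<Rightarrow> nat \<Rightarrow> real \<Rightarrow> real" where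
  "btil n Aa nu xi' k a = (-1) ^ k *
     (nu * sig Aa {1..n} (int k)
      + (\<Sum>i\<in>{1..n}. xi' i / sqrt (Delta Aa i a) * sig Aa ({1..n} - {i}) (int k - 1)))"

definition ctil :: "nat \<Rightarrow> (nat \<Rightarrow> real) \<Rightarrow> real \<Rightarrow> (nat \<Rightarrow> real) \<Rightarrow> nat \<Rightarrow> real \<Rightarrow> real" where
  "ctil n Aa nu xi' k a = (-1) ^ (k + 1) / 2 *
     (nu ^ 2 * a * sig Aa {1..n} (int k)
      + 2 * nu * (\<Sum>i\<in>{1..n}. xi' i / sqrt (Delta Aa i a) *
            (sig Aa ({1..n} - {i}) (int k) + a * sig Aa ({1..n} - {i}) (int k - 1)))
      + (\<Sum>i\<in>{1..n}. (xi' i) ^ 2 / Delta Aa i a * sig Aa ({1..n} - {i}) (int k - 1))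
      + (\<Sum>i\<in>{1..n}. \<Sum>j\<in>{1..n} - {i}.
            xi' i * xi' j / sqrt (Delta Aa i a * Delta Aa j a) *
            (sig Aa ({1..n} - {i, j}) (int k - 1) + a * sig Aa ({1..n} - {i, j}) (int k - 2))))"

definition PiF :: "nat \<Rightarrow> (nat \<Rightarrow> real) \<Rightarrow> real \<Rightarrow> (nat \<Rightarrow> real) \<Rightarrow> real \<Rightarrow> real \<Rightarrow> real" where
  "PiF n Aa nu xi' a Pa = a / xdot n Aa nu xi' a * Pa"

definition HF :: "nat \<Rightarrow> (nat \<Rightarrow> real) \<Rightarrow> real \<Rightarrow> (nat \<Rightarrow> real) \<Rightarrow> real \<Rightarrow> real \<Rightarrow> real \<Rightarrow> real" where
  "HF n Aa nu xi' a Pa Py = (PiF n Aa nu xi' a Pa) ^ 2 + a * Py ^ 2"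

definition GF :: "nat \<Rightarrow> (nat \<Rightarrow> real) \<Rightarrow> real \<Rightarrow> (nat \<Rightarrow> real) \<Rightarrow> real \<Rightarrow> real \<Rightarrow> real \<Rightarrow> real" where
  "GF n Aa nu xi' a Pa Py =
     (\<Sum>k\<in>{0..n}. Acoef n Aa (n - k) * (HF n Aa nu xi' a Pa Py) ^ (n - k) * Py ^ (2 * k + 1))"

definition Q1F :: "nat \<Rightarrow> (nat \<Rightarrow> real) \<Rightarrow> real \<Rightarrow> (nat \<Rightarrow> real) \<Rightarrow> real \<Rightarrow> real \<Rightarrow> real \<Rightarrow> real" where
  "Q1F n Aa nu xi' a Pa Py =
     (\<Sum>k\<in>{0..n}. btil n Aa nu xi' k a * (HF n Aa nu xi' a Pa Py) ^ (n - k)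
                   * PiF n Aa nu xi' a Pa * Py ^ (2 * k))"

definition Q2F :: "nat \<Rightarrow> (nat \<Rightarrow> real) \<Rightarrow> real \<Rightarrow> (nat \<Rightarrow> real) \<Rightarrow> real \<Rightarrow> real \<Rightarrow> real \<Rightarrow> real" where
  "Q2F n Aa nu xi' a Pa Py =
     (\<Sum>k\<in>{0..n}. ctil n Aa nu xi' k a * (HF n Aa nu xi' a Pa Py) ^ (n - k) * Py ^ (2 * k + 1))"

definition S1F :: "nat \<Rightarrow> (nat \<Rightarrow> real) \<Rightarrow> real \<Rightarrow> (nat \<Rightarrow> real) \<Rightarrow> real \<Rightarrow> real \<Rightarrow> real \<Rightarrow> real \<Rightarrow> real" where
  "S1F n Aa nu xi' a y Pa Py = Q1F n Aa nu xi' a Pa Py + y * GF n Aa nu xi' a Pa Py"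

definition S2F :: "nat \<Rightarrow> (nat \<Rightarrow> real) \<Rightarrow> real \<Rightarrow> (nat \<Rightarrow> real) \<Rightarrow> real \<Rightarrow> real \<Rightarrow> real \<Rightarrow> real \<Rightarrow> real" where
  "S2F n Aa nu xi' a y Pa Py = Q2F n Aa nu xi' a Pa Py + y * Q1F n Aa nu xi' a Pa Py
                                + y ^ 2 / 2 * GF n Aa nu xi' a Pa Py"

definition Mset :: "(nat \<Rightarrow> real) \<Rightarrow> (real \<times> real) set" where
  "Mset Aa = {0 <..< sqrt (Aa 1)} \<times> UNIV"

text \<open>Components of g = xdot^2 a^{-2} da^2 + a^{-1} dy^2 pulled back along a = u^2
  (so da = 2u du).\<close>
definition g_uu :: "nat \<Rightarrow> (nat \<Rightarrow> real) \<Rightarrow> real \<Rightarrow> (nat \<Rightarrow> real) \<Rightarrow> real \<times> real \<Rightarrow> real" where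
  "g_uu n Aa nu xi' p = (let u = fst p in
       (xdot n Aa nu xi' (u ^ 2)) ^ 2 / (u ^ 2) ^ 2 * (2 * u) ^ 2)"

definition g_uy :: "nat \<Rightarrow> (nat \<Rightarrow> real) \<Rightarrow> real \<Rightarrow> (nat \<Rightarrow> real) \<Rightarrow> real \<times> real \<Rightarrow> real" where
  "g_uy n Aa nu xi' p = 0"

definition g_yy :: "nat \<Rightarrow> (nat \<Rightarrow> real) \<Rightarrow> real \<Rightarrow> (nat \<Rightarrow> real) \<Rightarrow> real \<times> real \<Rightarrow> real" where
  "g_yy n Aa nu xi' p = 1 / (fst p) ^ 2"

text \<open>Cotangent-lifted coordinates on T*M: (u, y, p_u, p_y) with P_a = p_u / (2u).\<close>
definition S1_TM :: "nat \<Rightarrow> (nat \<Rightarrow> real) \<Rightarrow> real \<Rightarrow> (nat \<Rightarrow> real) \<Rightarrow> real \<times> real \<times> real \<times> real \<Rightarrow> real" where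
  "S1_TM n Aa nu xi' z = (case z of (u, y, pu, py) \<Rightarrow> S1F n Aa nu xi' (u ^ 2) y (pu / (2 * u)) py)"

definition S2_TM :: "nat \<Rightarrow> (nat \<Rightarrow> real) \<Rightarrow> real \<Rightarrow> (nat \<Rightarrow> real) \<Rightarrow> real \<times> real \<times> real \<times> real \<Rightarrow> real" where
  "S2_TM n Aa nu xi' z = (case z of (u, y, pu, py) \<Rightarrow> S2F n Aa nu xi' (u ^ 2) y (pu / (2 * u)) py)"

definition globally_defined :: "nat \<Rightarrow> (nat \<Rightarrow> real) \<Rightarrow> real \<Rightarrow> (nat \<Rightarrow> real) \<Rightarrow> bool" where
  "globally_defined n Aa nu xi' \<longleftrightarrow>
     \<comment> \<open>g is a smooth Riemannian metric on M\<close>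
     (smooth_on (Mset Aa) (g_uu n Aa nu xi') \<and> smooth_on (Mset Aa) (g_uy n Aa nu xi')
      \<and> smooth_on (Mset Aa) (g_yy n Aa nu xi')
      \<and> (\<forall>p\<in>Mset Aa. g_uu n Aa nu xi' p > 0 \<and>
            g_uu n Aa nu xi' p * g_yy n Aa nu xi' p - (g_uy n Aa nu xi' p) ^ 2 > 0))
   \<and> \<comment> \<open>a smooth diffeomorphism t of (0, sqrt a_1) onto a half-line, with g = Phi (dt^2+dy^2)/t^2\<close>
     (\<exists>t :: real \<Rightarrow> real. \<exists>V :: real set. \<exists>\<Phi> :: real \<times> real \<Rightarrow> real.
        (V = {0<..} \<or> V = {..<0}) \<and>
        bij_betw t {0 <..< sqrt (Aa 1)} V \<and>
        smooth_on {0 <..< sqrt (Aa 1)} t \<and>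
        smooth_on V (inv_into {0 <..< sqrt (Aa 1)} t) \<and>
        smooth_on (Mset Aa) \<Phi> \<and> (\<forall>p\<in>Mset Aa. \<Phi> p > 0) \<and>
        (\<forall>p\<in>Mset Aa.
           g_uu n Aa nu xi' p = \<Phi> p * (deriv t (fst p)) ^ 2 / (t (fst p)) ^ 2 \<and>
           g_uy n Aa nu xi' p = 0 \<and>
           g_yy n Aa nu xi' p = \<Phi> p / (t (fst p)) ^ 2))
   \<and> \<comment> \<open>S1, S2 smooth on T*M\<close>
     smooth_on (Mset Aa \<times> UNIV) (\<lambda>(p, q). S1_TM n Aa nu xi' (fst p, snd p, fst q, snd q))
   \<and> smooth_on (Mset Aa \<times> UNIV) (\<lambda>(p, q). S2_TM n Aa nu xi' (fst p, snd p, fst q, snd q))"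

end

theory Submission
  imports Defs
begin


lemma Ck_mono: "Ck_on (Suc k) S f \<Longrightarrow> Ck_on k S f"
proof (induction k arbitrary: f)
  case 0 then show ?case by simp
next
  case (Suc k) then show ?case by (metis Ck_on.simps(2))
qed

lemma Ck_cont: "Ck_on k S f \<Longrightarrow> continuous_on S f"
  by (cases k) auto

lemma Ck_const[simp]: "Ck_on k S (\<lambda>x. c)"
proof (induction k arbitrary: c)
  case 0 then show ?case by simp
next
  case (Suc k)
  show ?case using Suc by (auto intro!: exI[of _ "\<lambda>x. 0"])
qed

lemma Ck_add: "Ck_on k S f \<Longrightarrow> Ck_on k S g \<Longrightarrow> Ck_on k S (\<lambda>x. f x + g x)"
proof (induction k arbitrary: f g)
  case 0 then show ?case by (auto intro: continuous_intros)
next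
  case (Suc k)
  show ?case
  proof (simp, intro conjI ballI)
    show "continuous_on S (\<lambda>x. f x + g x)" using Suc.prems by (auto intro: continuous_intros)
    fix b :: 'a assume b: "b \<in> Basis"
    from Suc.prems(1) b obtain f' where f': "\<forall>x\<in>S. ((\<lambda>t. f (x + t *\<^sub>R b)) has_real_derivative f' x) (at 0)" "Ck_on k S f'" by auto
    from Suc.prems(2) b obtain g' where g': "\<forall>x\<in>S. ((\<lambda>t. g (x + t *\<^sub>R b)) has_real_derivative g' x) (at 0)" "Ck_on k S g'" by auto
    show "\<exists>h. (\<forall>x\<in>S. ((\<lambda>t. f (x + t *\<^sub>R b) + g (x + t *\<^sub>R b)) has_real_derivative h x) (at 0)) \<and> Ck_on k S h"
      by (rule exI[of _ "\<lambda>x. f' x + g' x"]) (use f' g' Suc.IH in \<open>auto intro: derivative_intros\<close>)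
  qed
qed

lemma Ck_mult: "Ck_on k S f \<Longrightarrow> Ck_on k S g \<Longrightarrow> Ck_on k S (\<lambda>x. f x * g x)"
proof (induction k arbitrary: f g)
  case 0 then show ?case by (auto intro: continuous_intros)
next
  case (Suc k)
  show ?case
  proof (simp, intro conjI ballI)
    show "continuous_on S (\<lambda>x. f x * g x)" using Suc.prems by (auto intro: continuous_intros)
    fix b :: 'a assume b: "b \<in> Basis"
    from Suc.prems(1) b obtain f' where f': "\<forall>x\<in>S. ((\<lambda>t. f (x + t *\<^sub>R b)) has_real_derivative f' x) (at 0)" "Ck_on k S f'" by auto
    from Suc.prems(2) b obtain g' where g': "\<forall>x\<in>S. ((\<lambda>t. g (x + t *\<^sub>R b)) has_real_derivative g' x) (at 0)" "Ck_on k S g'" by auto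
    have fk: "Ck_on k S f" "Ck_on k S g" using Suc.prems by (auto intro: Ck_mono)
    show "\<exists>h. (\<forall>x\<in>S. ((\<lambda>t. f (x + t *\<^sub>R b) * g (x + t *\<^sub>R b)) has_real_derivative h x) (at 0)) \<and> Ck_on k S h"
    proof (rule exI[of _ "\<lambda>x. f' x * g x + f x * g' x"], intro conjI ballI)
      fix x assume x: "x \<in> S"
      show "((\<lambda>t. f (x + t *\<^sub>R b) * g (x + t *\<^sub>R b)) has_real_derivative f' x * g x + f x * g' x) (at 0)"
        using DERIV_mult[OF f'(1)[rule_format, OF x] g'(1)[rule_format, OF x]] by (simp add: mult.commute)
    next
      show "Ck_on k S (\<lambda>x. f' x * g x + f x * g' x)"
        using Suc.IH f'(2) g'(2) fk Ck_add by blast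
    qed
  qed
qed

lemma Ck_linear: assumes "bounded_linear L" shows "Ck_on k S (L :: 'a::euclidean_space \<Rightarrow> real)"
proof (cases k)
  case 0 then show ?thesis using assms by (auto intro: linear_continuous_on)
next
  case (Suc m)
  interpret bounded_linear L by fact
  show ?thesis unfolding Suc
  proof (simp, intro conjI ballI)
    show "continuous_on S L" using assms by (auto intro: linear_continuous_on)
    fix b :: 'a assume b: "b \<in> Basis"
    show "\<exists>g. (\<forall>x\<in>S. ((\<lambda>t. L (x + t *\<^sub>R b)) has_real_derivative g x) (at 0)) \<and> Ck_on m S g"
    proof (rule exI[of _ "\<lambda>x. L b"], intro conjI ballI Ck_const)
      fix x
      have "(\<lambda>t. L (x + t *\<^sub>R b)) = (\<lambda>t. L x + t * L b)" by (simp add: add scale)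
      then show "((\<lambda>t. L (x + t *\<^sub>R b)) has_real_derivative L b) (at 0)"
        by (auto intro!: derivative_eq_intros)
    qed
  qed
qed

lemma Ck_compose:
  fixes h :: "real \<Rightarrow> real"
  assumes "Ck_on k U h" "Ck_on k S g" "g ` S \<subseteq> U"
  shows "Ck_on k S (\<lambda>x. h (g x))"
  using assms
proof (induction k arbitrary: h g)
  case 0 then show ?case by (auto intro: continuous_on_compose2)
next
  case (Suc k)
  show ?case
  proof (simp, intro conjI ballI)
    show "continuous_on S (\<lambda>x. h (g x))" using Suc.prems by (auto intro: continuous_on_compose2 Ck_cont)
    fix b :: 'a assume b: "b \<in> Basis"
    from Suc.prems(1) obtain h' where h': "\<forall>x\<in>U. ((\<lambda>t. h (x + t *\<^sub>R 1)) has_real_derivative h' x) (at 0)" "Ck_on k U h'"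
      by (auto simp: Basis_real_def)
    from Suc.prems(2) b obtain g' where g': "\<forall>x\<in>S. ((\<lambda>t. g (x + t *\<^sub>R b)) has_real_derivative g' x) (at 0)" "Ck_on k S g'" by auto
    have gk: "Ck_on k S g" using Suc.prems by (auto intro: Ck_mono)
    show "\<exists>q. (\<forall>x\<in>S. ((\<lambda>t. h (g (x + t *\<^sub>R b))) has_real_derivative q x) (at 0)) \<and> Ck_on k S q"
    proof (rule exI[of _ "\<lambda>x. h' (g x) * g' x"], intro conjI ballI)
      fix x assume x: "x \<in> S"
      have gx: "g x \<in> U" using x Suc.prems(3) by auto
      have "((\<lambda>t. h (t + g x)) has_real_derivative h' (g x)) (at 0)"
        using h'(1)[rule_format, OF gx] by (simp add: add.commute)
      then have hd: "(h has_real_derivative h' (g x)) (at (g x))"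
        using DERIV_shift[of h "h' (g x)" 0 "g x"] by simp
      have gd: "((\<lambda>t. g (x + t *\<^sub>R b)) has_real_derivative g' x) (at 0)" using g' x by auto
      show "((\<lambda>t. h (g (x + t *\<^sub>R b))) has_real_derivative h' (g x) * g' x) (at 0)"
        using DERIV_chain2[OF _ gd, of h] hd by simp
    next
      show "Ck_on k S (\<lambda>x. h' (g x) * g' x)"
        using Suc.IH[OF h'(2) gk Suc.prems(3)] g'(2) by (rule Ck_mult)
    qed
  qed
qed

lemma Ck_cong:
  assumes "open S" "\<And>x. x \<in> S \<Longrightarrow> f x = g x" "Ck_on k S f"
  shows "Ck_on k S g"
proof (cases k)
  case 0 then show ?thesis using assms continuous_on_cong by force
next
  case (Suc m)
  show ?thesis using assms(3) unfolding Suc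
  proof (simp, intro conjI ballI)
    assume a: "continuous_on S f \<and> (\<forall>b\<in>Basis. \<exists>g. (\<forall>x\<in>S. ((\<lambda>t. f (x + t *\<^sub>R b)) has_real_derivative g x) (at 0)) \<and> Ck_on m S g)"
    show "continuous_on S g" using a assms(2) continuous_on_cong by force
    fix b :: 'a assume b: "b \<in> Basis"
    from a b obtain f' where f': "\<forall>x\<in>S. ((\<lambda>t. f (x + t *\<^sub>R b)) has_real_derivative f' x) (at 0)" "Ck_on m S f'" by auto
    show "\<exists>q. (\<forall>x\<in>S. ((\<lambda>t. g (x + t *\<^sub>R b)) has_real_derivative q x) (at 0)) \<and> Ck_on m S q"
    proof (rule exI[of _ f'], intro conjI ballI f'(2))
      fix x assume x: "x \<in> S"
      have ev: "eventually (\<lambda>t. f (x + t *\<^sub>R b) = g (x + t *\<^sub>R b)) (nhds 0)"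
      proof -
        have "open ((\<lambda>t::real. x + t *\<^sub>R b) -` S)"
          by (rule continuous_open_vimage[OF assms(1)]) (intro continuous_intros)
        then have "eventually (\<lambda>t. t \<in> (\<lambda>t::real. x + t *\<^sub>R b) -` S) (nhds 0)"
          using x by (intro eventually_nhds_in_open) auto
        then have "eventually (\<lambda>t. x + t *\<^sub>R b \<in> S) (nhds 0)" by simp
        then show ?thesis by eventually_elim (use assms(2) in auto)
      qed
      show "((\<lambda>t. g (x + t *\<^sub>R b)) has_real_derivative f' x) (at 0)"
        using f'(1) x DERIV_cong_ev[OF refl ev refl] by auto
    qed
  qed
qed

lemma Ck_Suc_real:
  "Ck_on (Suc k) (U::real set) f \<longleftrightarrow> continuous_on U f \<and>
     (\<exists>g. (\<forall>x\<in>U. (f has_real_derivative g x) (at x)) \<and> Ck_on k U g)"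
proof -
  have "\<And>x d. ((\<lambda>t. f (x + t *\<^sub>R 1)) has_real_derivative d) (at 0) \<longleftrightarrow> (f has_real_derivative d) (at x)"
    using DERIV_shift[of f _ 0] by (simp add: add.commute)
  then show ?thesis by (simp add: Basis_real_def)
qed

lemma Ck_powr: "Ck_on k {0<..} (\<lambda>x. c * x powr r)"
proof (induction k arbitrary: c r)
  case 0 then show ?case by (auto intro!: continuous_intros)
next
  case (Suc k)
  show ?case unfolding Ck_Suc_real
  proof (intro conjI exI[of _ "\<lambda>x. (c * r) * x powr (r - 1)"] ballI Suc)
    show "continuous_on {0<..} (\<lambda>x. c * x powr r)" by (auto intro!: continuous_intros)
    fix x :: real assume "x \<in> {0<..}"
    then show "((\<lambda>x. c * x powr r) has_real_derivative c * r * x powr (r - 1)) (at x)"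
      by (auto intro!: derivative_eq_intros)
  qed
qed

lemma Ck_inv_pow: "Ck_on k (-{0}) (\<lambda>x. c * inverse x ^ m)"
proof (induction k arbitrary: c m)
  case 0 then show ?case by (auto intro!: continuous_intros)
next
  case (Suc k)
  show ?case unfolding Ck_Suc_real
  proof (intro conjI exI[of _ "\<lambda>x. (- c * real m) * inverse x ^ (Suc m)"] ballI Suc)
    show "continuous_on (-{0}) (\<lambda>x. c * inverse x ^ m)" by (auto intro!: continuous_intros)
    fix x :: real assume "x \<in> -{0}"
    then have x: "x \<noteq> 0" by simp
    have "((\<lambda>x. c * inverse x ^ m) has_real_derivative c * (real m * inverse x ^ (m - 1) * (- (inverse x * inverse x)))) (at x)"
      using x by (auto intro!: derivative_eq_intros)
    moreover have "c * (real m * inverse x ^ (m - 1) * (- (inverse x * inverse x))) = (- c * real m) * inverse x ^ (Suc m)"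
      by (cases m) (auto simp: power_Suc)
    ultimately show "((\<lambda>x. c * inverse x ^ m) has_real_derivative (- c * real m) * inverse x ^ (Suc m)) (at x)"
      by (rule DERIV_cong)
  qed
qed

lemma Ck_sqrt:
  assumes "Ck_on k S f" "\<And>x. x \<in> S \<Longrightarrow> f x > 0"
  shows "Ck_on k S (\<lambda>x. sqrt (f x))"
proof -
  have "Ck_on k {0<..} sqrt"
    by (rule Ck_cong[OF _ _ Ck_powr[of k 1 "1/2"]]) (auto simp: powr_half_sqrt)
  then show ?thesis using Ck_compose[of k "{0<..}" sqrt S f] assms by auto
qed

lemma Ck_powr_comp:
  assumes "Ck_on k S f" "\<And>x. x \<in> S \<Longrightarrow> f x > 0"
  shows "Ck_on k S (\<lambda>x. f x powr r)"
  using Ck_compose[OF Ck_powr[of k 1 r] assms(1)] assms(2) by auto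

lemma Ck_inverse:
  assumes "Ck_on k S f" "\<And>x. x \<in> S \<Longrightarrow> f x \<noteq> 0"
  shows "Ck_on k S (\<lambda>x. inverse (f x))"
proof -
  have "f ` S \<subseteq> -{0}" using assms(2) by auto
  then show ?thesis using Ck_compose[OF Ck_inv_pow[of k 1 1] assms(1)] by auto
qed

lemma Ck_divide:
  assumes "Ck_on k S f" "Ck_on k S g" "\<And>x. x \<in> S \<Longrightarrow> g x \<noteq> 0"
  shows "Ck_on k S (\<lambda>x. f x / g x)"
  using Ck_mult[OF assms(1) Ck_inverse[OF assms(2,3)]] by (simp add: divide_inverse)

lemma Ck_uminus: "Ck_on k S f \<Longrightarrow> Ck_on k S (\<lambda>x. - f x)"
  using Ck_mult[OF Ck_const[of k S "-1"], of f] by simp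

lemma Ck_diff: "Ck_on k S f \<Longrightarrow> Ck_on k S g \<Longrightarrow> Ck_on k S (\<lambda>x. f x - g x)"
proof -
  assume "Ck_on k S f" "Ck_on k S g"
  then have "Ck_on k S (\<lambda>x. f x + - g x)" by (intro Ck_add Ck_uminus)
  then show ?thesis by simp
qed

lemma Ck_power: "Ck_on k S f \<Longrightarrow> Ck_on k S (\<lambda>x. f x ^ m)"
  by (induction m) (auto intro: Ck_mult)

lemma Ck_sum: "(\<And>i. i \<in> I \<Longrightarrow> Ck_on k S (f i)) \<Longrightarrow> Ck_on k S (\<lambda>x. \<Sum>i\<in>I. f i x)"
proof (induction I rule: infinite_finite_induct)
  case (insert i I) then show ?case by (auto intro: Ck_add)
qed auto

lemma Ck_id: "Ck_on k S (\<lambda>x::real. x)"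
  using Ck_linear[of "\<lambda>x::real. x"] bounded_linear_ident by auto

lemma Ck_fst: "Ck_on k S (\<lambda>p::real \<times> real. fst p)"
  using Ck_linear[OF bounded_linear_fst] by auto
lemma Ck_snd: "Ck_on k S (\<lambda>p::real \<times> real. snd p)"
  using Ck_linear[OF bounded_linear_snd] by auto
lemma Ck_fst_fst: "Ck_on k S (\<lambda>p::(real \<times> real) \<times> (real \<times> real). fst (fst p))"
  using Ck_linear[OF bounded_linear_compose[OF bounded_linear_fst bounded_linear_fst]] by (auto simp: o_def)
lemma Ck_snd_fst: "Ck_on k S (\<lambda>p::(real \<times> real) \<times> (real \<times> real). snd (fst p))"
  using Ck_linear[OF bounded_linear_compose[OF bounded_linear_snd bounded_linear_fst]] by (auto simp: o_def)
lemma Ck_fst_snd: "Ck_on k S (\<lambda>p::(real \<times> real) \<times> (real \<times> real). fst (snd p))"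
  using Ck_linear[OF bounded_linear_compose[OF bounded_linear_fst bounded_linear_snd]] by (auto simp: o_def)
lemma Ck_snd_snd: "Ck_on k S (\<lambda>p::(real \<times> real) \<times> (real \<times> real). snd (snd p))"
  using Ck_linear[OF bounded_linear_compose[OF bounded_linear_snd bounded_linear_snd]] by (auto simp: o_def)



definition xd :: "nat \<Rightarrow> (nat \<Rightarrow> real) \<Rightarrow> real \<Rightarrow> (nat \<Rightarrow> real) \<Rightarrow> real \<Rightarrow> real" where
  "xd n Aa nu xi' a = nu / 2 + (\<Sum>i\<in>{1..n}. xi' i / (2 * (Aa i - a) * sqrt (Aa i - a)))"

lemma xfun_deriv:
  assumes "\<forall>i\<in>{1..n}. a < Aa i"
  shows "(xfun n Aa nu xi' has_real_derivative xd n Aa nu xi' a) (at a)"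
proof -
  have "((\<lambda>a. xi' i / sqrt (Delta Aa i a)) has_real_derivative xi' i / (2 * (Aa i - a) * sqrt (Aa i - a))) (at a)"
    if i: "i \<in> {1..n}" for i
  proof -
    have p: "Aa i - a > 0" using assms i by auto
    show ?thesis unfolding Delta_def
      using p by (auto intro!: derivative_eq_intros simp: field_simps)
  qed
  then have s: "((\<lambda>a. \<Sum>i\<in>{1..n}. xi' i / sqrt (Delta Aa i a)) has_real_derivative
       (\<Sum>i\<in>{1..n}. xi' i / (2 * (Aa i - a) * sqrt (Aa i - a)))) (at a)"
    by (intro DERIV_sum) auto
  have l: "((\<lambda>a. nu / 2 * a) has_real_derivative nu / 2) (at a)" by (auto intro!: derivative_eq_intros)
  show ?thesis unfolding xfun_def xd_def using DERIV_add[OF l s] by simp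
qed

lemma xdot_eq:
  assumes "\<forall>i\<in>{1..n}. a < Aa i"
  shows "xdot n Aa nu xi' a = xd n Aa nu xi' a"
  unfolding xdot_def using xfun_deriv[OF assms] by (rule DERIV_imp_deriv)

lemmas Ck_rules = Ck_const Ck_add Ck_diff Ck_mult Ck_divide Ck_sqrt Ck_power Ck_sum Ck_uminus Ck_id
  Ck_fst Ck_snd Ck_fst_fst Ck_snd_fst Ck_fst_snd Ck_snd_snd

lemma Ck_xd:
  assumes HA: "\<forall>i\<in>{1..n}. Aa 1 \<le> Aa i" and f: "Ck_on k S f" and lt: "\<And>x. x \<in> S \<Longrightarrow> f x < Aa 1"
  shows "Ck_on k S (\<lambda>x. xd n Aa nu xi' (f x))"
proof -
  have p: "Aa i - f x > 0" if "i \<in> {1..n}" "x \<in> S" for i x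
    using HA lt that by force
  show ?thesis unfolding xd_def
    apply (intro Ck_rules f)
    using p by (metis less_numeral_extra(3) mult_eq_0_iff real_sqrt_eq_zero_cancel_iff zero_neq_numeral)+
qed

lemma Ck_xdot:
  assumes HA: "\<forall>i\<in>{1..n}. Aa 1 \<le> Aa i" and f: "Ck_on k S f" and lt: "\<And>x. x \<in> S \<Longrightarrow> f x < Aa 1"
  shows "Ck_on k S (\<lambda>x. xdot n Aa nu xi' (f x))"
proof -
  have xc: "Ck_on k {..<Aa 1} (\<lambda>x. xd n Aa nu xi' x)"
    by (rule Ck_xd[OF HA Ck_id]) auto
  have "Ck_on k {..<Aa 1} (xdot n Aa nu xi')"
    by (rule Ck_cong[OF _ _ xc]) (use HA in \<open>fastforce intro!: xdot_eq[symmetric]\<close>)+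
  then show ?thesis using Ck_compose[OF _ f, of "{..<Aa 1}"] lt by auto
qed



lemma Ck_S12F:
  assumes HA: "\<forall>i\<in>{1..n}. Aa 1 \<le> Aa i"
    and af: "Ck_on k S af" and yf: "Ck_on k S yf" and paf: "Ck_on k S paf" and pyf: "Ck_on k S pyf"
    and lt: "\<And>x. x \<in> S \<Longrightarrow> af x < Aa 1"
    and nz: "\<And>x. x \<in> S \<Longrightarrow> xdot n Aa nu xi' (af x) \<noteq> 0"
  shows "Ck_on k S (\<lambda>x. S1F n Aa nu xi' (af x) (yf x) (paf x) (pyf x))"
    "Ck_on k S (\<lambda>x. S2F n Aa nu xi' (af x) (yf x) (paf x) (pyf x))"
proof -
  have p: "Aa i - af x > 0" if "i \<in> {1..n}" "x \<in> S" for i x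
    using HA lt that by force
  have p2: "- (af x - Aa i) > 0" if "i \<in> {1..n}" "x \<in> S" for i x
    using p[OF that] by simp
  have p3: "- (af x - Aa i) \<noteq> 0" if "i \<in> {1..n}" "x \<in> S" for i x
    using p[OF that] by simp
  have p4: "sqrt (- (af x - Aa i)) \<noteq> 0" if "i \<in> {1..n}" "x \<in> S" for i x
    using p[OF that] by simp
  have p5: "- (af x - Aa i) * - (af x - Aa j) > 0" if "i \<in> {1..n}" "j \<in> {1..n}" "x \<in> S" for i j x
    using p[OF that(1,3)] p[OF that(2,3)] by simp
  have p6: "sqrt (- (af x - Aa i) * - (af x - Aa j)) \<noteq> 0" if "i \<in> {1..n}" "j \<in> {1..n}" "x \<in> S" for i j x
    using real_sqrt_gt_zero[OF p5[OF that]] by linarith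
  have lt': "x \<in> S \<Longrightarrow> af x < Aa (Suc 0)" for x using lt by simp
  have pi: "x \<in> S \<Longrightarrow> Suc 0 \<le> i \<Longrightarrow> i \<le> n \<Longrightarrow> af x < Aa i" for x i using p[of i x] by simp
  have nz': "x \<in> S \<Longrightarrow> xdot n Aa nu xi' (af x) = 0 \<Longrightarrow> False" for x using nz by blast
  note facts = p2 p3 p4 p5 p6 lt nz
  show "Ck_on k S (\<lambda>x. S1F n Aa nu xi' (af x) (yf x) (paf x) (pyf x))"
    unfolding S1F_def Q1F_def GF_def HF_def PiF_def btil_def Delta_def
    by (intro Ck_rules Ck_xdot[OF HA] af yf paf pyf) (auto intro: facts lt' pi dest: nz', (metis less_irrefl pi)+)
  show "Ck_on k S (\<lambda>x. S2F n Aa nu xi' (af x) (yf x) (paf x) (pyf x))"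
    unfolding S2F_def Q1F_def Q2F_def GF_def HF_def PiF_def btil_def ctil_def Delta_def
    apply (intro Ck_rules Ck_xdot[OF HA] af yf paf pyf)
    apply (auto intro: facts lt' pi dest: nz')
    apply (use pi in \<open>fastforce intro!: mult_pos_pos\<close>)+
    done
qed



lemma smooth_inv:
  fixes t t' :: "real \<Rightarrow> real"
  assumes I: "open I" and V: "open V" and bij: "bij_betw t I V"
    and der: "\<And>u. u \<in> I \<Longrightarrow> (t has_real_derivative t' u) (at u)"
    and nz: "\<And>u. u \<in> I \<Longrightarrow> t' u \<noteq> 0"
    and sm: "\<And>k. Ck_on k I (\<lambda>u. inverse (t' u))"
  shows "Ck_on k V (inv_into I t)"
proof -
  define g where "g = inv_into I t"
  have gt: "\<And>u. u \<in> I \<Longrightarrow> g (t u) = u" unfolding g_def using bij bij_betw_inv_into_left by fastforce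
  have tg: "\<And>v. v \<in> V \<Longrightarrow> t (g v) = v" unfolding g_def using bij bij_betw_inv_into_right by fastforce
  have gV: "\<And>v. v \<in> V \<Longrightarrow> g v \<in> I" unfolding g_def using bij
    by (metis bij_betw_def inv_into_into)
  have cont: "isCont g v" if v: "v \<in> V" for v
  proof -
    have u: "g v \<in> I" using gV v by auto
    obtain d where d: "d > 0" "cball (g v) d \<subseteq> I" using I u open_contains_cball by blast
    have "isCont g (t (g v))"
    proof (rule isCont_inverse_function[where x = "g v" and f = t and g = g, OF d(1)])
      fix z assume "\<bar>z - g v\<bar> \<le> d"
      then have z: "z \<in> I" using d(2) by (auto simp: cball_def dist_real_def abs_minus_commute)
      show "g (t z) = z" using gt z by auto
    next
      fix z assume "\<bar>z - g v\<bar> \<le> d"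
      then have z: "z \<in> I" using d(2) by (auto simp: cball_def dist_real_def abs_minus_commute)
      show "isCont t z" using der z DERIV_isCont by blast
    qed
    then show ?thesis using tg v by simp
  qed
  have deri: "(g has_real_derivative inverse (t' (g v))) (at v)" if v: "v \<in> V" for v
  proof -
    obtain e where e: "e > 0" "ball v e \<subseteq> V" using V v open_contains_ball by blast
    show ?thesis
    proof (rule DERIV_inverse_function[where a = "v - e" and b = "v + e"])
      show "(t has_real_derivative t' (g v)) (at (g v))" using der gV v by auto
      show "t' (g v) \<noteq> 0" using nz gV v by auto
      show "v - e < v" "v < v + e" using e by auto
      fix y assume "v - e < y" "y < v + e"
      then have "y \<in> V" using e(2) by (auto simp: ball_def dist_real_def)
      then show "t (g y) = y" using tg by auto
    next
      show "isCont g v" using cont v by auto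
    qed
  qed
  have gVI: "g ` V \<subseteq> I" using gV by auto
  have "Ck_on k V g"
  proof (induction k)
    case 0 then show ?case using cont by (auto intro: continuous_at_imp_continuous_on)
  next
    case (Suc k)
    show ?case unfolding Ck_Suc_real
    proof (intro conjI exI[of _ "\<lambda>v. inverse (t' (g v))"] ballI)
      show "continuous_on V g" using cont by (auto intro: continuous_at_imp_continuous_on)
      show "Ck_on k V (\<lambda>v. inverse (t' (g v)))" using Ck_compose[OF sm Suc gVI] .
    qed (use deri in auto)
  qed
  then show ?thesis unfolding g_def .
qed



definition tf :: "nat \<Rightarrow> (nat \<Rightarrow> real) \<Rightarrow> (nat \<Rightarrow> real) \<Rightarrow> real \<Rightarrow> real" where
  "tf n Aa xi' u = u + (\<Sum>i\<in>{1..n}. xi' i * u / (Aa i * sqrt (Aa i - u\<^sup>2)))"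
definition rf :: "nat \<Rightarrow> (nat \<Rightarrow> real) \<Rightarrow> (nat \<Rightarrow> real) \<Rightarrow> real \<Rightarrow> real" where
  "rf n Aa xi' u = 1 + (\<Sum>i\<in>{1..n}. xi' i / (Aa i * sqrt (Aa i - u\<^sup>2)))"
definition tp :: "nat \<Rightarrow> (nat \<Rightarrow> real) \<Rightarrow> (nat \<Rightarrow> real) \<Rightarrow> real \<Rightarrow> real" where
  "tp n Aa xi' u = 2 * xd n Aa 1 xi' (u\<^sup>2)"

lemma tf_rf: "tf n Aa xi' u = u * rf n Aa xi' u"
  unfolding tf_def rf_def by (simp add: sum_distrib_left algebra_simps)

lemma t1: "2 * c / ((2 * A - 2 * w) * s) = c / ((A - w) * (s::real))"
  by (metis (no_types, opaque_lifting) mult.assoc mult_divide_mult_cancel_left_if right_diff_distrib zero_neq_numeral)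
lemma term_deriv:
  assumes w: "u\<^sup>2 < A" and A: "0 < A"
  shows "((\<lambda>u. c * u / (A * sqrt (A - u\<^sup>2))) has_real_derivative c / ((A - u\<^sup>2) * sqrt (A - u\<^sup>2))) (at u)"
proof -
  have w': "A - u\<^sup>2 > 0" using w by simp
  have s: "sqrt (A - u\<^sup>2) > 0" using w' by simp
  have ss: "sqrt (A - u\<^sup>2) * sqrt (A - u\<^sup>2) = A - u\<^sup>2" using w' by simp
  have "((\<lambda>u. c * u / (A * sqrt (A - u\<^sup>2))) has_real_derivative
     (c * (A * sqrt (A - u\<^sup>2)) - c * u * (A * (inverse (sqrt (A - u\<^sup>2)) / 2 * (- (2 * u))))) / (A * sqrt (A - u\<^sup>2))\<^sup>2) (at u)"
    using w' A s by (auto intro!: derivative_eq_intros simp: power2_eq_square)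
  moreover have "(c * (A * sqrt (A - u\<^sup>2)) - c * u * (A * (inverse (sqrt (A - u\<^sup>2)) / 2 * (- (2 * u))))) / (A * sqrt (A - u\<^sup>2))\<^sup>2
     = c / ((A - u\<^sup>2) * sqrt (A - u\<^sup>2))"
    using w' A s ss by (simp add: field_simps power2_eq_square)
  ultimately show ?thesis by (rule DERIV_cong)
qed

lemma tf_deriv:
  assumes "\<forall>i\<in>{1..n}. u\<^sup>2 < Aa i \<and> 0 < Aa i"
  shows "(tf n Aa xi' has_real_derivative tp n Aa xi' u) (at u)"
proof -
  have s: "((\<lambda>u. \<Sum>i\<in>{1..n}. xi' i * u / (Aa i * sqrt (Aa i - u\<^sup>2))) has_real_derivative
      (\<Sum>i\<in>{1..n}. xi' i / ((Aa i - u\<^sup>2) * sqrt (Aa i - u\<^sup>2)))) (at u)"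
    using assms by (intro DERIV_sum term_deriv) auto
  have e: "tp n Aa xi' u = 1 + (\<Sum>i\<in>{1..n}. xi' i / ((Aa i - u\<^sup>2) * sqrt (Aa i - u\<^sup>2)))"
    unfolding tp_def xd_def by (simp add: sum_distrib_left t1)
  show ?thesis unfolding tf_def e using DERIV_add[OF DERIV_ident s] by simp
qed



lemma global_generic:
  fixes n :: nat and Aa xi' :: "nat \<Rightarrow> real" and V :: "real set"
  assumes HA: "\<forall>i\<in>{1..n}. Aa 1 \<le> Aa i" and a1: "0 < Aa 1"
    and V: "V = {0<..} \<or> V = {..<0}"
    and bij: "bij_betw (tf n Aa xi') {0<..<sqrt (Aa 1)} V"
    and tpnz: "\<And>u. u \<in> {0<..<sqrt (Aa 1)} \<Longrightarrow> tp n Aa xi' u \<noteq> 0"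
  shows "globally_defined n Aa 1 xi'"
proof -
  define I where "I = {0<..<sqrt (Aa 1)}"
  have memI: "0 < u \<and> u\<^sup>2 < Aa 1" if "u \<in> I" for u
  proof -
    have "0 < u" "u < sqrt (Aa 1)" using that by (auto simp: I_def)
    then have "u\<^sup>2 < (sqrt (Aa 1))\<^sup>2" by (intro power_strict_mono) auto
    then show ?thesis using a1 \<open>0 < u\<close> by simp
  qed
  have hi: "\<forall>i\<in>{1..n}. u\<^sup>2 < Aa i \<and> 0 < Aa i" if "u \<in> I" for u
    using memI[OF that] HA a1 by force
  have hi': "\<forall>i\<in>{1..n}. u\<^sup>2 < Aa i" if "u \<in> I" for u using hi[OF that] by auto
  have xdot_tp: "xdot n Aa 1 xi' (u\<^sup>2) = tp n Aa xi' u / 2" if "u \<in> I" for u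
    using xdot_eq[OF hi'[OF that]] by (simp add: tp_def)
  have MI: "fst p \<in> I" if "p \<in> Mset Aa" for p using that by (auto simp: Mset_def I_def)
  have openM: "open (Mset Aa)" unfolding Mset_def by (intro open_Times) auto
  have tfV: "tf n Aa xi' u \<in> V" if "u \<in> I" for u using bij that unfolding I_def bij_betw_def by auto
  have tfnz: "tf n Aa xi' u \<noteq> 0" if "u \<in> I" for u using tfV[OF that] V by auto
  have rfnz: "rf n Aa xi' u \<noteq> 0" if "u \<in> I" for u using tfnz[OF that] by (simp add: tf_rf)
  have derivt: "deriv (tf n Aa xi') u = tp n Aa xi' u" if "u \<in> I" for u
    using tf_deriv[OF hi[OF that]] by (rule DERIV_imp_deriv)
  have hp1: "0 < Aa i - u\<^sup>2" if "i \<in> {1..n}" "u \<in> {0<..<sqrt (Aa 1)}" for i u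
    using hi[of u] that unfolding I_def by auto
  have hp2: "Aa i * sqrt (Aa i - u\<^sup>2) \<noteq> 0" if "i \<in> {1..n}" "u \<in> {0<..<sqrt (Aa 1)}" for i u
  proof -
    have a: "0 < Aa i" "u\<^sup>2 < Aa i" using hi[of u] that unfolding I_def by auto
    then have "Aa i * sqrt (Aa i - u\<^sup>2) > 0" by (simp add: mult_pos_pos)
    then show ?thesis by linarith
  qed
  have hq1: "0 < Aa i - (fst p)\<^sup>2" if "i \<in> {1..n}" "p \<in> Mset Aa" for i p
    using hp1[OF that(1)] MI[OF that(2)] unfolding I_def by auto
  have hq2: "Aa i * sqrt (Aa i - (fst p)\<^sup>2) \<noteq> 0" if "i \<in> {1..n}" "p \<in> Mset Aa" for i p
    using hp2[OF that(1)] MI[OF that(2)] unfolding I_def by auto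
  have P1: "smooth_on (Mset Aa) (g_uu n Aa 1 xi') \<and> smooth_on (Mset Aa) (g_uy n Aa 1 xi')
      \<and> smooth_on (Mset Aa) (g_yy n Aa 1 xi')
      \<and> (\<forall>p\<in>Mset Aa. g_uu n Aa 1 xi' p > 0 \<and>
            g_uu n Aa 1 xi' p * g_yy n Aa 1 xi' p - (g_uy n Aa 1 xi' p) ^ 2 > 0)"
  proof (intro conjI ballI)
    show "smooth_on (Mset Aa) (g_uu n Aa 1 xi')" unfolding smooth_on_def g_uu_def Let_def
      apply (intro allI Ck_rules Ck_xdot[OF HA])
      using memI MI by auto (metis less_irrefl)
    show "smooth_on (Mset Aa) (g_uy n Aa 1 xi')" unfolding smooth_on_def g_uy_def by auto
    show "smooth_on (Mset Aa) (g_yy n Aa 1 xi')" unfolding smooth_on_def g_yy_def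
      apply (intro allI Ck_rules)
      using memI MI by (metis less_irrefl zero_eq_power2)
    fix p assume p: "p \<in> Mset Aa"
    have u: "fst p \<in> I" using MI p by auto
    have gu: "g_uu n Aa 1 xi' p = (tp n Aa xi' (fst p))\<^sup>2 / (fst p)\<^sup>2"
      unfolding g_uu_def Let_def xdot_tp[OF u] using memI[OF u]
      by (simp add: field_simps power2_eq_square)
    show "g_uu n Aa 1 xi' p > 0" unfolding gu using tpnz[of "fst p"] u memI[OF u]
      by (simp add: I_def)
    then show "g_uu n Aa 1 xi' p * g_yy n Aa 1 xi' p - (g_uy n Aa 1 xi' p) ^ 2 > 0"
      unfolding g_yy_def g_uy_def using memI[OF u] by simp
  qed
  have P2: "\<exists>t :: real \<Rightarrow> real. \<exists>V :: real set. \<exists>\<Phi> :: real \<times> real \<Rightarrow> real.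
        (V = {0<..} \<or> V = {..<0}) \<and>
        bij_betw t {0 <..< sqrt (Aa 1)} V \<and>
        smooth_on {0 <..< sqrt (Aa 1)} t \<and>
        smooth_on V (inv_into {0 <..< sqrt (Aa 1)} t) \<and>
        smooth_on (Mset Aa) \<Phi> \<and> (\<forall>p\<in>Mset Aa. \<Phi> p > 0) \<and>
        (\<forall>p\<in>Mset Aa.
           g_uu n Aa 1 xi' p = \<Phi> p * (deriv t (fst p)) ^ 2 / (t (fst p)) ^ 2 \<and>
           g_uy n Aa 1 xi' p = 0 \<and>
           g_yy n Aa 1 xi' p = \<Phi> p / (t (fst p)) ^ 2)"
  proof (intro exI[of _ "tf n Aa xi'"] exI[of _ V] exI[of _ "\<lambda>p. (rf n Aa xi' (fst p))\<^sup>2"] conjI ballI V bij)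
    show "smooth_on {0<..<sqrt (Aa 1)} (tf n Aa xi')" unfolding smooth_on_def tf_def
      apply (intro allI Ck_rules)
      by (metis hp1 hp2)+
    show "smooth_on V (inv_into {0<..<sqrt (Aa 1)} (tf n Aa xi'))" unfolding smooth_on_def
    proof
      fix k
      show "Ck_on k V (inv_into {0<..<sqrt (Aa 1)} (tf n Aa xi'))"
      proof (rule smooth_inv[OF _ _ bij])
        show "open {0<..<sqrt (Aa 1)}" by simp
        show "open V" using V by auto
        show "(tf n Aa xi' has_real_derivative tp n Aa xi' u) (at u)" if "u \<in> {0<..<sqrt (Aa 1)}" for u
          using tf_deriv[OF hi] that by (simp add: I_def)
        show "tp n Aa xi' u \<noteq> 0" if "u \<in> {0<..<sqrt (Aa 1)}" for u using tpnz that by simp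
        fix k
        show "Ck_on k {0<..<sqrt (Aa 1)} (\<lambda>u. inverse (tp n Aa xi' u))"
          unfolding tp_def
          apply (intro Ck_inverse Ck_mult Ck_const Ck_xd[OF HA] Ck_power Ck_id)
          using memI tpnz unfolding I_def tp_def by auto
      qed
    qed
    show "smooth_on (Mset Aa) (\<lambda>p. (rf n Aa xi' (fst p))\<^sup>2)" unfolding smooth_on_def rf_def
      apply (intro allI Ck_rules)
      by (metis hq1 hq2)+
    fix p assume p: "p \<in> Mset Aa"
    have u: "fst p \<in> I" using MI p by auto
    show "(rf n Aa xi' (fst p))\<^sup>2 > 0" using rfnz[OF u] by simp
    have gu: "g_uu n Aa 1 xi' p = (tp n Aa xi' (fst p))\<^sup>2 / (fst p)\<^sup>2"
      unfolding g_uu_def Let_def xdot_tp[OF u] using memI[OF u]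
      by (simp add: field_simps power2_eq_square)
    show "g_uu n Aa 1 xi' p = (rf n Aa xi' (fst p))\<^sup>2 * (deriv (tf n Aa xi') (fst p))\<^sup>2 / (tf n Aa xi' (fst p))\<^sup>2"
      unfolding gu derivt[OF u] tf_rf using rfnz[OF u] memI[OF u]
      by (simp add: field_simps power2_eq_square)
    show "g_uy n Aa 1 xi' p = 0" by (simp add: g_uy_def)
    show "g_yy n Aa 1 xi' p = (rf n Aa xi' (fst p))\<^sup>2 / (tf n Aa xi' (fst p))\<^sup>2"
      unfolding g_yy_def tf_rf using rfnz[OF u] memI[OF u]
      by (simp add: field_simps power2_eq_square)
  qed
  define S where "S = Mset Aa \<times> (UNIV :: (real \<times> real) set)"
  have SI: "fst (fst z) \<in> I" if "z \<in> S" for z using that MI by (auto simp: S_def)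
  have e1: "(\<lambda>(p, q). S1_TM n Aa 1 xi' (fst p, snd p, fst q, snd q)) =
     (\<lambda>z. S1F n Aa 1 xi' ((fst (fst z))\<^sup>2) (snd (fst z)) (fst (snd z) / (2 * fst (fst z))) (snd (snd z)))"
    by (simp add: S1_TM_def fun_eq_iff)
  have e2: "(\<lambda>(p, q). S2_TM n Aa 1 xi' (fst p, snd p, fst q, snd q)) =
     (\<lambda>z. S2F n Aa 1 xi' ((fst (fst z))\<^sup>2) (snd (fst z)) (fst (snd z) / (2 * fst (fst z))) (snd (snd z)))"
    by (simp add: S2_TM_def fun_eq_iff)
  have pa: "Ck_on k S (\<lambda>z. fst (snd z) / (2 * fst (fst z)))" for k
    by (intro Ck_rules) (use SI memI in fastforce)
  have lt: "(fst (fst z))\<^sup>2 < Aa 1" if "z \<in> S" for z using memI SI that by blast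
  have nz: "xdot n Aa 1 xi' ((fst (fst z))\<^sup>2) \<noteq> 0" if "z \<in> S" for z
    using xdot_tp[OF SI[OF that]] tpnz[of "fst (fst z)"] SI[OF that] by (simp add: I_def)
  have P3: "smooth_on (Mset Aa \<times> UNIV) (\<lambda>(p, q). S1_TM n Aa 1 xi' (fst p, snd p, fst q, snd q))
   \<and> smooth_on (Mset Aa \<times> UNIV) (\<lambda>(p, q). S2_TM n Aa 1 xi' (fst p, snd p, fst q, snd q))"
    unfolding e1 e2 smooth_on_def S_def[symmetric]
    using Ck_S12F[OF HA Ck_power[OF Ck_fst_fst] Ck_snd_fst pa Ck_snd_snd lt nz] by blast
  show ?thesis unfolding globally_defined_def using P1 P2 P3 by blast
qed



lemma big_u:
  fixes a1 M :: real
  assumes a1: "0 < a1"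
  shows "\<exists>u. 0 < u \<and> u < sqrt a1 \<and> M < u / (a1 * sqrt (a1 - u\<^sup>2))"
proof -
  define c where "c = sqrt a1"
  have c: "0 < c" "c\<^sup>2 = a1" using a1 by (auto simp: c_def)
  define M' where "M' = max M 1"
  have M': "M \<le> M'" "0 < M'" by (auto simp: M'_def)
  define d where "d = min (c/2) (c / (4 * a1 * M'))"
  have d: "0 < d" "d \<le> c/2" "d \<le> c / (4 * a1 * M')" using c M' a1 by (auto simp: d_def)
  have dd: "d\<^sup>2 \<le> a1/4"
  proof -
    have "d\<^sup>2 \<le> (c/2)\<^sup>2" using d by (intro power_mono) auto
    then show ?thesis using c by (simp add: power_divide)
  qed
  define u where "u = sqrt (a1 - d\<^sup>2)"
  have pos: "0 < a1 - d\<^sup>2" using dd a1 by linarith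
  have u0: "0 < u" using pos by (simp add: u_def)
  have uc: "u < c" unfolding u_def c_def using d(1) by (simp add: real_sqrt_less_iff)
  have u2: "u\<^sup>2 = a1 - d\<^sup>2" using pos by (simp add: u_def)
  have sq: "sqrt (a1 - u\<^sup>2) = d" using u2 d(1) by simp
  have uhalf: "c/2 \<le> u"
  proof -
    have "(c/2)\<^sup>2 \<le> u\<^sup>2" using u2 dd c a1 by (simp add: power_divide)
    then show ?thesis using u0 c by (meson abs_le_square_iff abs_of_pos le_less_trans less_eq_real_def pos2 zero_less_divide_iff power2_le_imp_le)
  qed
  have "M * (a1 * d) \<le> M' * (a1 * d)"
    using M' a1 d by (intro mult_right_mono) auto
  also have "\<dots> \<le> M' * (a1 * (c / (4 * a1 * M')))"
    using M' a1 d by (intro mult_left_mono) auto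
  also have "\<dots> = c / 4" using M' a1 by (simp add: field_simps)
  also have "\<dots> < u" using uhalf c by linarith
  finally have "M * (a1 * d) < u" .
  then have "M < u / (a1 * d)" using a1 d by (simp add: field_simps)
  then show ?thesis using u0 uc sq by (auto simp: c_def)
qed

lemma tp_eq: "tp n Aa xi' u = 1 + (\<Sum>i\<in>{1..n}. xi' i / ((Aa i - u\<^sup>2) * sqrt (Aa i - u\<^sup>2)))"
  unfolding tp_def xd_def by (simp add: sum_distrib_left t1)

lemma tf0: "tf n Aa xi' 0 = 0" by (simp add: tf_def)

lemma case_common:
  fixes n :: nat and Aa xi' :: "nat \<Rightarrow> real"
  assumes HA: "\<forall>i\<in>{1..n}. Aa 1 \<le> Aa i" and a1: "0 < Aa 1"
  shows "u\<^sup>2 < Aa 1 \<Longrightarrow> (tf n Aa xi' has_real_derivative tp n Aa xi' u) (at u)"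
    and "0 \<le> u \<Longrightarrow> u < sqrt (Aa 1) \<Longrightarrow> u\<^sup>2 < Aa 1"
proof -
  assume "u\<^sup>2 < Aa 1"
  then show "(tf n Aa xi' has_real_derivative tp n Aa xi' u) (at u)"
    using HA a1 by (intro tf_deriv) force
next
  assume "0 \<le> u" "u < sqrt (Aa 1)"
  then have "u\<^sup>2 < (sqrt (Aa 1))\<^sup>2" by (intro power_strict_mono) auto
  then show "u\<^sup>2 < Aa 1" using a1 by simp
qed

lemma case_plus:
  fixes n :: nat and Aa w :: "nat \<Rightarrow> real"
  assumes n1: "1 \<le> n" and HA: "\<forall>i\<in>{1..n}. Aa 1 \<le> Aa i" and a1: "0 < Aa 1"
    and wpos: "\<forall>i\<in>{1..n}. 0 < w i" and w1: "w 1 = 1"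
  shows "globally_defined n Aa 1 w"
proof -
  define c where "c = sqrt (Aa 1)"
  have c0: "0 < c" using a1 by (simp add: c_def)
  note der = case_common(1)[OF HA a1, of _ w]
  note rng = case_common(2)[OF HA a1, folded c_def]
  have dpos: "0 < Aa i - u\<^sup>2" if "i \<in> {1..n}" "u\<^sup>2 < Aa 1" for i u
  proof -
    have "Aa 1 \<le> Aa i" using HA that(1) by blast
    then show ?thesis using that(2) by linarith
  qed
  have tpos: "tp n Aa w u > 0" if "u\<^sup>2 < Aa 1" for u
  proof -
    have "0 \<le> (\<Sum>i\<in>{1..n}. w i / ((Aa i - u\<^sup>2) * sqrt (Aa i - u\<^sup>2)))"
      using dpos[OF _ that] wpos by (intro sum_nonneg) (simp add: less_imp_le)
    then show ?thesis unfolding tp_eq by linarith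
  qed
  have mono: "tf n Aa w a < tf n Aa w b" if "0 \<le> a" "a < b" "b < c" for a b
    using that(2) proof (rule DERIV_pos_imp_increasing)
    fix x assume "a \<le> x" "x \<le> b"
    then have "x\<^sup>2 < Aa 1" using rng that by auto
    then show "\<exists>y. (tf n Aa w has_real_derivative y) (at x) \<and> 0 < y" using der tpos by blast
  qed
  have lower: "u / (Aa 1 * sqrt (Aa 1 - u\<^sup>2)) \<le> tf n Aa w u" if "0 < u" "u < c" for u
  proof -
    have u2: "u\<^sup>2 < Aa 1" using rng that by auto
    have "w 1 * u / (Aa 1 * sqrt (Aa 1 - u\<^sup>2)) \<le> (\<Sum>i\<in>{1..n}. w i * u / (Aa i * sqrt (Aa i - u\<^sup>2)))"
    proof (rule member_le_sum)
      show "1 \<in> {1..n}" using n1 by auto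
      fix i assume "i \<in> {1..n} - {1}"
      then have "i \<in> {1..n}" by auto
      then show "0 \<le> w i * u / (Aa i * sqrt (Aa i - u\<^sup>2))"
      proof -
        have p: "0 < Aa i - u\<^sup>2" using dpos[OF \<open>i \<in> {1..n}\<close> u2] .
        have "Aa 1 \<le> Aa i" using HA \<open>i \<in> {1..n}\<close> by blast
        then have q: "0 < Aa i" using a1 by linarith
        have "0 < Aa i * sqrt (Aa i - u\<^sup>2)" using p q by simp
        moreover have "0 < w i" using wpos \<open>i \<in> {1..n}\<close> by blast
        then have "0 \<le> w i * u" using that by simp
        ultimately show ?thesis by simp
      qed
    qed simp
    then show ?thesis unfolding tf_def using w1 that by simp
  qed
  have bij: "bij_betw (tf n Aa w) {0<..<sqrt (Aa 1)} {0<..}"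
    unfolding bij_betw_def
  proof (intro conjI)
    show "inj_on (tf n Aa w) {0<..<sqrt (Aa 1)}"
    proof (rule inj_onI)
      fix a b assume a: "a \<in> {0<..<sqrt (Aa 1)}" and b: "b \<in> {0<..<sqrt (Aa 1)}" and e: "tf n Aa w a = tf n Aa w b"
      show "a = b"
      proof (rule ccontr)
        assume "a \<noteq> b"
        then consider "a < b" | "b < a" by linarith
        then show False
        proof cases
          case 1 then show False using mono[of a b] a b e by (simp add: c_def)
        next
          case 2 then show False using mono[of b a] a b e by (simp add: c_def)
        qed
      qed
    qed
    show "tf n Aa w ` {0<..<sqrt (Aa 1)} = {0<..}"
    proof
      show "tf n Aa w ` {0<..<sqrt (Aa 1)} \<subseteq> {0<..}"
        using mono[of 0] tf0 by (auto simp: c_def)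
      show "{0<..} \<subseteq> tf n Aa w ` {0<..<sqrt (Aa 1)}"
      proof
        fix s :: real assume "s \<in> {0<..}"
        then have s: "0 < s" by simp
        obtain u2 where u2: "0 < u2" "u2 < c" "s < u2 / (Aa 1 * sqrt (Aa 1 - u2\<^sup>2))"
          using big_u[OF a1, of s] unfolding c_def by blast
        have "s \<le> tf n Aa w u2" using lower[OF u2(1,2)] u2(3) by linarith
        moreover have "tf n Aa w 0 \<le> s" using s tf0 by simp
        moreover have "\<forall>x. 0 \<le> x \<and> x \<le> u2 \<longrightarrow> isCont (tf n Aa w) x"
        proof (intro allI impI)
          fix x assume "0 \<le> x \<and> x \<le> u2"
          then have "x\<^sup>2 < Aa 1" using rng u2 by auto
          then show "isCont (tf n Aa w) x" using der DERIV_isCont by blast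
        qed
        ultimately obtain x where x: "0 \<le> x" "x \<le> u2" "tf n Aa w x = s"
          using IVT[of "tf n Aa w" 0 s u2] u2 by auto
        have "x \<noteq> 0" using x(3) s tf0 by auto
        then have "x \<in> {0<..<sqrt (Aa 1)}" using x u2 by (auto simp: c_def)
        then show "s \<in> tf n Aa w ` {0<..<sqrt (Aa 1)}" using x(3) by force
      qed
    qed
  qed
  show ?thesis
  proof (rule global_generic[OF HA a1 _ bij])
    fix u assume "u \<in> {0<..<sqrt (Aa 1)}"
    then have "u\<^sup>2 < Aa 1" using rng by (auto simp: c_def)
    then show "tp n Aa w u \<noteq> 0" using tpos by force
  qed simp
qed



lemma case_minus:
  fixes n :: nat and Aa w :: "nat \<Rightarrow> real"
  assumes n1: "1 \<le> n" and HA: "\<forall>i\<in>{1..n}. Aa 1 \<le> Aa i" and a1: "0 < Aa 1"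
    and wpos: "\<forall>i\<in>{1..n}. 0 < w i" and w1: "w 1 = 1"
    and big: "1 < (\<Sum>i\<in>{1..n}. w i / (Aa i * sqrt (Aa i)))"
  shows "globally_defined n Aa 1 (\<lambda>i. - w i)"
proof -
  define W where "W = (\<lambda>i. - w i)"
  define c where "c = sqrt (Aa 1)"
  have c0: "0 < c" using a1 by (simp add: c_def)
  note der = case_common(1)[OF HA a1, of _ W]
  note rng = case_common(2)[OF HA a1, folded c_def]
  have dpos: "0 < Aa i - u\<^sup>2" if "i \<in> {1..n}" "u\<^sup>2 < Aa 1" for i u
  proof -
    have "Aa 1 \<le> Aa i" using HA that(1) by blast
    then show ?thesis using that(2) by linarith
  qed
  have Apos: "0 < Aa i" if "i \<in> {1..n}" for i
  proof -
    have "Aa 1 \<le> Aa i" using HA that(1) by blast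
    then show ?thesis using a1 by linarith
  qed
  have tneg: "tp n Aa W u < 0" if u2: "u\<^sup>2 < Aa 1" for u
  proof -
    have e: "tp n Aa W u = 1 - (\<Sum>i\<in>{1..n}. w i / ((Aa i - u\<^sup>2) * sqrt (Aa i - u\<^sup>2)))"
      unfolding tp_eq W_def by (simp add: sum_negf)
    have "(\<Sum>i\<in>{1..n}. w i / (Aa i * sqrt (Aa i))) \<le> (\<Sum>i\<in>{1..n}. w i / ((Aa i - u\<^sup>2) * sqrt (Aa i - u\<^sup>2)))"
    proof (rule sum_mono)
      fix i assume i: "i \<in> {1..n}"
      have p: "0 < Aa i - u\<^sup>2" using dpos[OF i u2] .
      have q: "0 < Aa i" using Apos[OF i] .
      have le1: "Aa i - u\<^sup>2 \<le> Aa i" by simp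
      have le2: "sqrt (Aa i - u\<^sup>2) \<le> sqrt (Aa i)" using le1 by (simp only: real_sqrt_le_iff)
      have "(Aa i - u\<^sup>2) * sqrt (Aa i - u\<^sup>2) \<le> Aa i * sqrt (Aa i)"
        using le1 le2 p q by (intro mult_mono) auto
      moreover have "0 < (Aa i * sqrt (Aa i)) * ((Aa i - u\<^sup>2) * sqrt (Aa i - u\<^sup>2))"
        using p q by simp
      moreover have "0 \<le> w i" using wpos i by (simp add: less_imp_le)
      ultimately show "w i / (Aa i * sqrt (Aa i)) \<le> w i / ((Aa i - u\<^sup>2) * sqrt (Aa i - u\<^sup>2))"
        by (metis divide_left_mono)
    qed
    then show ?thesis unfolding e using big by linarith
  qed
  have mono: "tf n Aa W a > tf n Aa W b" if "0 \<le> a" "a < b" "b < c" for a b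
    using that(2) proof (rule DERIV_neg_imp_decreasing)
    fix x assume "a \<le> x" "x \<le> b"
    then have "x\<^sup>2 < Aa 1" using rng that by auto
    then show "\<exists>y. (tf n Aa W has_real_derivative y) (at x) \<and> y < 0" using der tneg by blast
  qed
  have upper: "tf n Aa W u \<le> u - u / (Aa 1 * sqrt (Aa 1 - u\<^sup>2))" if "0 < u" "u < c" for u
  proof -
    have u2: "u\<^sup>2 < Aa 1" using rng that by auto
    have "w 1 * u / (Aa 1 * sqrt (Aa 1 - u\<^sup>2)) \<le> (\<Sum>i\<in>{1..n}. w i * u / (Aa i * sqrt (Aa i - u\<^sup>2)))"
    proof (rule member_le_sum)
      show "1 \<in> {1..n}" using n1 by auto
      fix i assume "i \<in> {1..n} - {1}"
      then have i: "i \<in> {1..n}" by auto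
      show "0 \<le> w i * u / (Aa i * sqrt (Aa i - u\<^sup>2))"
      proof -
        have p: "0 < Aa i - u\<^sup>2" using dpos[OF i u2] .
        have "0 < Aa i * sqrt (Aa i - u\<^sup>2)" using p Apos[OF i] by simp
        moreover have "0 < w i" using wpos i by blast
        then have "0 \<le> w i * u" using that by simp
        ultimately show ?thesis by simp
      qed
    qed simp
    moreover have "tf n Aa W u = u - (\<Sum>i\<in>{1..n}. w i * u / (Aa i * sqrt (Aa i - u\<^sup>2)))"
      unfolding tf_def W_def by (simp add: sum_negf)
    ultimately show ?thesis using w1 by simp
  qed
  have bij: "bij_betw (tf n Aa W) {0<..<sqrt (Aa 1)} {..<0}"
    unfolding bij_betw_def
  proof (intro conjI)
    show "inj_on (tf n Aa W) {0<..<sqrt (Aa 1)}"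
    proof (rule inj_onI)
      fix a b assume a: "a \<in> {0<..<sqrt (Aa 1)}" and b: "b \<in> {0<..<sqrt (Aa 1)}" and e: "tf n Aa W a = tf n Aa W b"
      show "a = b"
      proof (rule ccontr)
        assume "a \<noteq> b"
        then consider "a < b" | "b < a" by linarith
        then show False
        proof cases
          case 1 then show False using mono[of a b] a b e by (simp add: c_def)
        next
          case 2 then show False using mono[of b a] a b e by (simp add: c_def)
        qed
      qed
    qed
    show "tf n Aa W ` {0<..<sqrt (Aa 1)} = {..<0}"
    proof
      show "tf n Aa W ` {0<..<sqrt (Aa 1)} \<subseteq> {..<0}"
      proof
        fix v assume "v \<in> tf n Aa W ` {0<..<sqrt (Aa 1)}"
        then obtain u where u: "u \<in> {0<..<sqrt (Aa 1)}" "v = tf n Aa W u" by blast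
        have "tf n Aa W u < tf n Aa W 0" using mono[of 0 u] u by (simp add: c_def)
        then show "v \<in> {..<0}" using u tf0 by simp
      qed
      show "{..<0} \<subseteq> tf n Aa W ` {0<..<sqrt (Aa 1)}"
      proof
        fix s :: real assume "s \<in> {..<0}"
        then have s: "s < 0" by simp
        obtain u2 where u2: "0 < u2" "u2 < c" "c - s < u2 / (Aa 1 * sqrt (Aa 1 - u2\<^sup>2))"
          using big_u[OF a1, of "c - s"] unfolding c_def by blast
        have "tf n Aa W u2 \<le> s" using upper[OF u2(1,2)] u2 by linarith
        moreover have "s \<le> tf n Aa W 0" using s tf0 by simp
        moreover have "\<forall>x. 0 \<le> x \<and> x \<le> u2 \<longrightarrow> isCont (tf n Aa W) x"
        proof (intro allI impI)
          fix x assume "0 \<le> x \<and> x \<le> u2"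
          then have "x\<^sup>2 < Aa 1" using rng u2 by auto
          then show "isCont (tf n Aa W) x" using der DERIV_isCont by blast
        qed
        ultimately obtain x where x: "0 \<le> x" "x \<le> u2" "tf n Aa W x = s"
          using IVT2[of "tf n Aa W" u2 s 0] u2 by auto
        have "x \<noteq> 0" using x(3) s tf0 by auto
        then have "x \<in> {0<..<sqrt (Aa 1)}" using x u2 by (auto simp: c_def)
        then show "s \<in> tf n Aa W ` {0<..<sqrt (Aa 1)}" using x(3) by force
      qed
    qed
  qed
  have "globally_defined n Aa 1 W"
  proof (rule global_generic[OF HA a1 _ bij])
    fix u assume "u \<in> {0<..<sqrt (Aa 1)}"
    then have "u\<^sup>2 < Aa 1" using rng by (auto simp: c_def)
    then show "tp n Aa W u \<noteq> 0" using tneg by force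
  qed simp
  then show ?thesis by (simp add: W_def)
qed



lemma ppow: "0 < (x::real) \<Longrightarrow> \<bar>x\<bar> powr (3/2) = x * sqrt x"
proof -
  assume x: "0 < x"
  have "\<bar>x\<bar> powr (3/2) = x powr (1 + 1/2)" using x by simp
  also have "\<dots> = x powr 1 * x powr (1/2)" by (rule powr_add)
  also have "\<dots> = x * sqrt x" using x by (simp add: powr_half_sqrt)
  finally show ?thesis .
qed

theorem proposition29:
  fixes n :: nat and Aa :: "nat \<Rightarrow> real" and \<xi> :: "nat \<Rightarrow> real"
  assumes "n \<ge> 2"
    and "inj_on Aa {1..n}"
    and "0 < Aa 1" and "Aa 1 < 1"
    and "\<forall>i\<in>{2..n}. Aa i > 1"
    and "\<forall>i\<in>{2..n}. \<xi> i > 0"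
  shows "(1 / \<bar>Aa 1\<bar> powr (3/2) + (\<Sum>i\<in>{2..n}. \<xi> i / \<bar>Aa i\<bar> powr (3/2)) > 1 \<longrightarrow>
            globally_defined n Aa 1 (\<lambda>i. if i = 1 then -1 else - \<xi> i))
       \<and> globally_defined n Aa 1 (\<lambda>i. if i = 1 then 1 else \<xi> i)"
proof -
  have n1: "1 \<le> n" using assms(1) by simp
  have i2: "i \<in> {2..n}" if "i \<in> {1..n}" "i \<noteq> 1" for i using that by auto
  have HA: "\<forall>i\<in>{1..n}. Aa 1 \<le> Aa i"
  proof
    fix i assume i: "i \<in> {1..n}"
    show "Aa 1 \<le> Aa i"
    proof (cases "i = 1")
      case False
      then have "Aa i > 1" using assms(5) i2[OF i] by blast
      then show ?thesis using assms(4) by linarith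
    qed simp
  qed
  define w where "w = (\<lambda>i. if i = 1 then 1 else \<xi> i)"
  have wpos: "\<forall>i\<in>{1..n}. 0 < w i"
  proof
    fix i assume i: "i \<in> {1..n}"
    show "0 < w i"
    proof (cases "i = 1")
      case False
      then show ?thesis using assms(6) i2[OF i] by (simp add: w_def)
    qed (simp add: w_def)
  qed
  have w1: "w 1 = 1" by (simp add: w_def)
  have plus: "globally_defined n Aa 1 (\<lambda>i. if i = 1 then 1 else \<xi> i)"
    using case_plus[OF n1 HA assms(3) wpos w1] by (simp add: w_def)
  have minus: "globally_defined n Aa 1 (\<lambda>i. if i = 1 then -1 else - \<xi> i)"
    if H: "1 / \<bar>Aa 1\<bar> powr (3/2) + (\<Sum>i\<in>{2..n}. \<xi> i / \<bar>Aa i\<bar> powr (3/2)) > 1"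
  proof -
    have s: "(\<Sum>i\<in>{1..n}. w i / (Aa i * sqrt (Aa i))) = w 1 / (Aa 1 * sqrt (Aa 1)) + (\<Sum>i\<in>{2..n}. w i / (Aa i * sqrt (Aa i)))"
      using sum.atLeast_Suc_atMost[OF n1, of "\<lambda>i. w i / (Aa i * sqrt (Aa i))"] by (simp add: numeral_2_eq_2)
    have s2: "(\<Sum>i\<in>{2..n}. w i / (Aa i * sqrt (Aa i))) = (\<Sum>i\<in>{2..n}. \<xi> i / \<bar>Aa i\<bar> powr (3/2))"
    proof (rule sum.cong[OF refl])
      fix i assume i: "i \<in> {2..n}"
      then have "Aa i > 0" using assms(5) by fastforce
      moreover have "w i = \<xi> i" using i by (simp add: w_def)
      ultimately show "w i / (Aa i * sqrt (Aa i)) = \<xi> i / \<bar>Aa i\<bar> powr (3/2)"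
        using ppow[of "Aa i"] by metis
    qed
    have s1: "w 1 / (Aa 1 * sqrt (Aa 1)) = 1 / \<bar>Aa 1\<bar> powr (3/2)" using ppow[OF assms(3)] w1 by metis
    have big: "1 < (\<Sum>i\<in>{1..n}. w i / (Aa i * sqrt (Aa i)))" using H unfolding s s1 s2 .
    have e: "(\<lambda>i. if i = 1 then -1 else - \<xi> i) = (\<lambda>i. - w i)" by (auto simp: w_def fun_eq_iff)
    show ?thesis unfolding e by (rule case_minus[OF n1 HA assms(3) wpos w1 big])
  qed
  show ?thesis using plus minus by blast
qed

end
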